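(* Let $S\subset\{2,\dots,p\}$ with cardinality ${\rm s}$, let $\gamma^S_S:=\Sigma_{S,S}^{-1}\mathbb{E}\mathbf{x}_S^T\mathbf{x}_{-1}\gamma^0$ be the coefficient vector of the projection of $\mathbf{x}_{-1}\gamma^0$ on $\mathbf{x}_S$, let $\gamma^S\in\mathbb{R}^{p-1}$ be $\gamma^S_S$ completed with zeroes outside $S$, and let $v^S:=\Sigma_{-1,-1}(\gamma^0-\gamma^S)$ with $v^S_{-S}$ its subvector of entries indexed by $\{2,\dots,p\}\setminus S$. Then $$\|v^S_{-S}\|_\infty\le\big\vert\!\big\vert\!\big\vert\Sigma_{-S,-S}-\Sigma_{-S,S}\Sigma_{S,S}^{-1}\Sigma_{S,-S}\big\vert\!\big\vert\!\big\vert_1\,\|\gamma^0_{-S}\|_\infty.$$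
   Context: $\mathbf{x}=(\mathbf{x}_1,\dots,\mathbf{x}_p)$ is a zero-mean Gaussian row vector with nonsingular covariance $\Sigma$; $\mathbf{x}_{-1}=(\mathbf{x}_2,\dots,\mathbf{x}_p)$, $\Sigma_{-1,-1}=\mathbb{E}\mathbf{x}_{-1}^T\mathbf{x}_{-1}$, $\gamma^0:=\Sigma_{-1,-1}^{-1}\mathbb{E}\mathbf{x}_{-1}^T\mathbf{x}_1\in\mathbb{R}^{p-1}$, with entries indexed by $\{2,\dots,p\}$. For $S\subset\{2,\dots,p\}$, $-S:=\{2,\dots,p\}\setminus S$, $\mathbf{x}_S=\{\mathbf{x}_j\}_{j\in S}$, $\mathbf{x}_{-S}=\{\mathbf{x}_j\}_{j\in -S}$, $\Sigma_{S,S}=\mathbb{E}\mathbf{x}_S^T\mathbf{x}_S$, $\Sigma_{-S,-S}=\mathbb{E}\mathbf{x}_{-S}^T\mathbf{x}_{-S}$, $\Sigma_{S,-S}=\mathbb{E}\mathbf{x}_S^T\mathbf{x}_{-S}=\Sigma_{-S,S}^T$; $\gamma^0_{-S}$ is the subvector of $\gamma^0$ indexed by $-S$. For a matrix $A=(a_{j,k})$, $\vert\!\vert\!\vert A\vert\!\vert\!\vert_1:=\max_j\sum_k|a_{j,k}|$. *)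

theory Defs
  imports Complex_Main
begin

text \<open>Matrices and vectors are represented as functions on natural-number indices,
  only the entries inside the relevant index sets matter.\<close>

definition inv_on :: "nat set \<Rightarrow> (nat \<Rightarrow> nat \<Rightarrow> real) \<Rightarrow> (nat \<Rightarrow> nat \<Rightarrow> real)" where
  "inv_on I A = (THE B. (\<forall>i\<in>I. \<forall>j\<in>I. (\<Sum>k\<in>I. A i k * B k j) = (if i = j then 1 else 0))
                       \<and> (\<forall>i j. i \<notin> I \<or> j \<notin> I \<longrightarrow> B i j = 0))"

definition sup_norm_on :: "nat set \<Rightarrow> (nat \<Rightarrow> real) \<Rightarrow> real" where
  "sup_norm_on I v = Max (insert 0 ((\<lambda>i. \<bar>v i\<bar>) ` I))"

definition mat_norm1_on :: "nat set \<Rightarrow> (nat \<Rightarrow> nat \<Rightarrow> real) \<Rightarrow> real" where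
  "mat_norm1_on I A = Max (insert 0 ((\<lambda>j. \<Sum>k\<in>I. \<bar>A j k\<bar>) ` I))"

end

theory Submission
  imports Defs "HOL-Library.Function_Algebras"
begin

definition sc :: "real \<Rightarrow> (nat \<Rightarrow> real) \<Rightarrow> (nat \<Rightarrow> real)" where "sc c f = (\<lambda>i. c * f i)"

lemma vs_sc: "vector_space sc"
  unfolding vector_space_def module_def sc_def
  by (auto simp: fun_eq_iff algebra_simps)

interpretation V: vector_space sc by (rule vs_sc)

lemma sum_fun_apply: "(\<Sum>x\<in>A. (f x :: nat \<Rightarrow> real)) i = (\<Sum>x\<in>A. f x i)"
  by (induct A rule: infinite_finite_induct) auto

definition PD :: "nat set \<Rightarrow> (nat \<Rightarrow> nat \<Rightarrow> real) \<Rightarrow> bool" where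
  "PD I A = (\<forall>x. (\<exists>i\<in>I. x i \<noteq> 0) \<longrightarrow> (\<Sum>i\<in>I. \<Sum>j\<in>I. x i * A i j * x j) > 0)"

lemma pd_inj:
  assumes "PD I A" "\<forall>i\<in>I. (\<Sum>j\<in>I. A i j * x j) = 0"
  shows "\<forall>j\<in>I. x j = 0"
proof (rule ccontr)
  assume "\<not> ?thesis"
  then have "(\<Sum>i\<in>I. \<Sum>j\<in>I. x i * A i j * x j) > 0" using assms(1) unfolding PD_def by blast
  moreover have "(\<Sum>i\<in>I. \<Sum>j\<in>I. x i * A i j * x j) = (\<Sum>i\<in>I. x i * (\<Sum>j\<in>I. A i j * x j))"
    by (simp add: sum_distrib_left mult.assoc)
  also have "\<dots> = 0" using assms(2) by simp
  ultimately show False by simp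
qed

definition col :: "(nat \<Rightarrow> nat \<Rightarrow> real) \<Rightarrow> nat set \<Rightarrow> nat \<Rightarrow> nat \<Rightarrow> real" where
  "col A I j = (\<lambda>i. if i \<in> I then A i j else 0)"

definition ev :: "nat \<Rightarrow> nat \<Rightarrow> real" where
  "ev m = (\<lambda>i. if i = m then 1 else 0)"

lemma span_supported:
  assumes "finite I" "\<forall>i. i \<notin> I \<longrightarrow> w i = 0"
  shows "w \<in> V.span (ev ` I)"
proof -
  have "w = (\<Sum>m\<in>I. sc (w m) (ev m))"
  proof
    fix i
    show "w i = (\<Sum>m\<in>I. sc (w m) (ev m)) i"
      unfolding sum_fun_apply sc_def ev_def using assms
      by (auto simp: if_distrib cong: if_cong)
  qed
  also have "\<dots> \<in> V.span (ev ` I)"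
    by (intro V.span_sum V.span_scale V.span_base) auto
  finally show ?thesis .
qed

lemma right_inv_exists:
  assumes fin: "finite I" and pd: "PD I A"
  shows "\<exists>B. (\<forall>i\<in>I. \<forall>j\<in>I. (\<Sum>k\<in>I. A i k * B k j) = (if i = j then 1 else 0))
             \<and> (\<forall>i j. i \<notin> I \<or> j \<notin> I \<longrightarrow> B i j = 0)"
proof -
  define C where "C = col A I ` I"
  have inj: "inj_on (col A I) I"
  proof (rule inj_onI)
    fix j k assume jk: "j \<in> I" "k \<in> I" "col A I j = col A I k"
    show "j = k"
    proof (rule ccontr)
      assume ne: "j \<noteq> k"
      define x where "x = (\<lambda>l. ev j l - ev k l)"
      have "\<forall>i\<in>I. (\<Sum>l\<in>I. A i l * x l) = 0"
      proof
        fix i assume i: "i \<in> I"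
        have "(\<Sum>l\<in>I. A i l * x l) = (\<Sum>l\<in>I. A i l * ev j l) - (\<Sum>l\<in>I. A i l * ev k l)"
          by (simp add: x_def algebra_simps sum_subtractf)
        also have "\<dots> = A i j - A i k" using jk fin
          by (simp add: ev_def if_distrib cong: if_cong)
        also have "\<dots> = 0" using jk(3) i unfolding col_def by (metis diff_self)
        finally show "(\<Sum>l\<in>I. A i l * x l) = 0" .
      qed
      from pd_inj[OF pd this] jk ne show False by (auto simp: x_def ev_def)
    qed
  qed
  have finC: "finite C" using fin by (simp add: C_def)
  have cardC: "card C = card I" using inj by (simp add: C_def card_image)
  have reidx: "(\<Sum>v\<in>C. sc (u v) v) = (\<Sum>j\<in>I. sc (u (col A I j)) (col A I j))" for u
    unfolding C_def by (rule sum.reindex[OF inj, unfolded comp_def])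
  have evalC: "(\<Sum>j\<in>I. sc (c j) (col A I j)) i = (\<Sum>j\<in>I. A i j * c j)" if "i \<in> I" for c i
    unfolding sum_fun_apply sc_def col_def using that by (simp add: mult.commute)
  have indC: "V.independent C"
  proof (rule V.independent_if_scalars_zero[OF finC])
    fix f x assume h: "(\<Sum>x\<in>C. sc (f x) x) = 0" "x \<in> C"
    then obtain j where j: "j \<in> I" "x = col A I j" by (auto simp: C_def)
    have "\<forall>i\<in>I. (\<Sum>j\<in>I. A i j * f (col A I j)) = 0"
    proof
      fix i assume "i \<in> I"
      have "(\<Sum>j\<in>I. A i j * f (col A I j)) = (\<Sum>v\<in>C. sc (f v) v) i"
        using evalC[OF \<open>i \<in> I\<close>, of "\<lambda>j. f (col A I j)"] reidx[of f] by simp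
      then show "(\<Sum>j\<in>I. A i j * f (col A I j)) = 0" using h(1) by simp
    qed
    from pd_inj[OF pd this] j show "f x = 0" by auto
  qed
  have CE: "C \<subseteq> V.span (ev ` I)"
    using fin by (auto simp: C_def col_def intro!: span_supported)
  have evC: "ev m \<in> V.span C" if m: "m \<in> I" for m
  proof (rule ccontr)
    assume nm: "ev m \<notin> V.span C"
    then have "ev m \<notin> C" using V.span_base by blast
    have ind: "V.independent (insert (ev m) C)" using nm indC by (simp add: V.independent_insert)
    have "insert (ev m) C \<subseteq> V.span (ev ` I)"
      using CE m by (auto intro: V.span_base)
    from V.independent_span_bound[OF _ ind this] fin
    have "card (insert (ev m) C) \<le> card (ev ` I)" by auto
    also have "\<dots> \<le> card I" by (rule card_image_le[OF fin])
    finally show False using \<open>ev m \<notin> C\<close> finC cardC by simp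
  qed
  have "\<forall>m\<in>I. \<exists>u. ev m = (\<Sum>v\<in>C. sc (u v) v)"
    using evC V.span_finite[OF finC] by blast
  then obtain U where U: "\<And>m. m \<in> I \<Longrightarrow> ev m = (\<Sum>v\<in>C. sc (U m v) v)" by metis
  define B where "B = (\<lambda>j m. if j \<in> I \<and> m \<in> I then U m (col A I j) else 0)"
  have "(\<Sum>k\<in>I. A i k * B k m) = (if i = m then 1 else 0)" if "i \<in> I" "m \<in> I" for i m
  proof -
    have "(\<Sum>k\<in>I. A i k * B k m) = (\<Sum>k\<in>I. A i k * U m (col A I k))"
      using that by (auto simp: B_def intro: sum.cong)
    also have "\<dots> = (\<Sum>v\<in>C. sc (U m v) v) i"
      using evalC[OF \<open>i \<in> I\<close>, of "\<lambda>j. U m (col A I j)"] reidx[of "U m"] by simp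
    also have "\<dots> = ev m i" using U[OF \<open>m \<in> I\<close>] by simp
    finally show ?thesis by (simp add: ev_def)
  qed
  then show ?thesis by (intro exI[of _ B]) (auto simp: B_def)
qed

lemma inv_on_props:
  assumes fin: "finite I" and pd: "PD I A"
  shows "\<forall>i\<in>I. \<forall>j\<in>I. (\<Sum>k\<in>I. A i k * inv_on I A k j) = (if i = j then 1 else 0)"
    and "\<forall>i j. i \<notin> I \<or> j \<notin> I \<longrightarrow> inv_on I A i j = 0"
    and "\<forall>i\<in>I. \<forall>j\<in>I. (\<Sum>k\<in>I. inv_on I A i k * A k j) = (if i = j then 1 else 0)"
proof -
  define P where "P B = ((\<forall>i\<in>I. \<forall>j\<in>I. (\<Sum>k\<in>I. A i k * B k j) = (if i = j then 1 else 0))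
                       \<and> (\<forall>i j. i \<notin> I \<or> j \<notin> I \<longrightarrow> B i j = 0))" for B
  obtain B0 where B0: "P B0" using right_inv_exists[OF fin pd] unfolding P_def by blast
  have uniq: "B = B0" if "P B" for B
  proof (intro ext)
    fix j m
    show "B j m = B0 j m"
    proof (cases "m \<in> I")
      case True
      have "\<forall>i\<in>I. (\<Sum>k\<in>I. A i k * (B k m - B0 k m)) = 0"
        using that B0 True unfolding P_def by (simp add: algebra_simps sum_subtractf)
      from pd_inj[OF pd this] that B0 show ?thesis unfolding P_def by (cases "j \<in> I") auto
    next
      case False then show ?thesis using that B0 unfolding P_def by auto
    qed
  qed
  have "inv_on I A = B0" unfolding inv_on_def P_def[symmetric]
    using B0 uniq by (rule the_equality)
  then have Pi: "P (inv_on I A)" using B0 by simp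
  then show "\<forall>i\<in>I. \<forall>j\<in>I. (\<Sum>k\<in>I. A i k * inv_on I A k j) = (if i = j then 1 else 0)"
    and "\<forall>i j. i \<notin> I \<or> j \<notin> I \<longrightarrow> inv_on I A i j = 0" unfolding P_def by auto
  show "\<forall>i\<in>I. \<forall>j\<in>I. (\<Sum>k\<in>I. inv_on I A i k * A k j) = (if i = j then 1 else 0)"
  proof (intro ballI)
    fix i j assume ij: "i \<in> I" "j \<in> I"
    define d where "d l = (\<Sum>k\<in>I. inv_on I A l k * A k j) - (if l = j then 1 else 0)" for l
    have "\<forall>l\<in>I. (\<Sum>i\<in>I. A l i * d i) = 0"
    proof
      fix l assume l: "l \<in> I"
      have "(\<Sum>i\<in>I. A l i * d i) = (\<Sum>i\<in>I. \<Sum>k\<in>I. A l i * inv_on I A i k * A k j) - (\<Sum>i\<in>I. A l i * (if i = j then 1 else 0))"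
        by (simp add: d_def algebra_simps sum_subtractf sum_distrib_left)
      also have "(\<Sum>i\<in>I. \<Sum>k\<in>I. A l i * inv_on I A i k * A k j) = (\<Sum>k\<in>I. (\<Sum>i\<in>I. A l i * inv_on I A i k) * A k j)"
        by (subst sum.swap) (simp add: sum_distrib_right)
      also have "\<dots> = (\<Sum>k\<in>I. (if l = k then 1 else 0) * A k j)"
        using Pi l unfolding P_def by (intro sum.cong) auto
      also have "\<dots> = A l j" using l fin by (simp add: if_distrib[of "\<lambda>c. c * _"] sum.delta cong: if_cong)
      also have "(\<Sum>i\<in>I. A l i * (if i = j then 1 else 0)) = A l j" using ij fin
        by (simp add: if_distrib cong: if_cong)
      finally show "(\<Sum>i\<in>I. A l i * d i) = 0" by simp
    qed
    from pd_inj[OF pd this] ij show "(\<Sum>k\<in>I. inv_on I A i k * A k j) = (if i = j then 1 else 0)"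
      by (auto simp: d_def)
  qed
qed

theorem lemma3p3:
  fixes p :: nat and \<Sigma> :: "nat \<Rightarrow> nat \<Rightarrow> real" and S :: "nat set"
    and \<gamma>0 \<gamma>S v :: "nat \<Rightarrow> real"
  assumes sym: "\<forall>i\<in>{1..p}. \<forall>j\<in>{1..p}. \<Sigma> i j = \<Sigma> j i"
    and posdef: "\<forall>x :: nat \<Rightarrow> real. (\<exists>i\<in>{1..p}. x i \<noteq> 0) \<longrightarrow>
                    (\<Sum>i\<in>{1..p}. \<Sum>j\<in>{1..p}. x i * \<Sigma> i j * x j) > 0"
    and S_sub: "S \<subseteq> {2..p}"
  defines "\<gamma>0 \<equiv> (\<lambda>i. if i \<in> {2..p} then (\<Sum>k\<in>{2..p}. inv_on {2..p} \<Sigma> i k * \<Sigma> k 1) else 0)"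
    and "\<gamma>S \<equiv> (\<lambda>i. if i \<in> S then (\<Sum>k\<in>S. inv_on S \<Sigma> i k * (\<Sum>l\<in>{2..p}. \<Sigma> k l * \<gamma>0 l)) else 0)"
    and "v \<equiv> (\<lambda>i. \<Sum>k\<in>{2..p}. \<Sigma> i k * (\<gamma>0 k - \<gamma>S k))"
  shows "sup_norm_on ({2..p} - S) v
         \<le> mat_norm1_on ({2..p} - S)
              (\<lambda>i j. \<Sigma> i j - (\<Sum>k\<in>S. \<Sum>l\<in>S. \<Sigma> i k * inv_on S \<Sigma> k l * \<Sigma> l j))
           * sup_norm_on ({2..p} - S) \<gamma>0"
proof -
  define T where "T = {2..p}"
  define R where "R = T - S"
  define B where "B = inv_on S \<Sigma>"
  define M where "M = (\<lambda>i j. \<Sigma> i j - (\<Sum>k\<in>S. \<Sum>l\<in>S. \<Sigma> i k * inv_on S \<Sigma> k l * \<Sigma> l j))"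
  have finT: "finite T" by (simp add: T_def)
  have ST: "S \<subseteq> T" using S_sub by (simp add: T_def)
  have finS: "finite S" using finT ST finite_subset by blast
  have finR: "finite R" using finT by (simp add: R_def)
  have pd: "PD S \<Sigma>" unfolding PD_def
  proof (intro allI impI)
    fix x :: "nat \<Rightarrow> real" assume ex: "\<exists>i\<in>S. x i \<noteq> 0"
    define y where "y i = (if i \<in> S then x i else 0)" for i
    have S1: "S \<subseteq> {1..p}" using S_sub by auto
    have "\<exists>i\<in>{1..p}. y i \<noteq> 0" using ex S1 by (auto simp: y_def)
    then have pos: "(\<Sum>i\<in>{1..p}. \<Sum>j\<in>{1..p}. y i * \<Sigma> i j * y j) > 0" using posdef by blast
    have inner: "(\<Sum>j\<in>{1..p}. y i * \<Sigma> i j * y j) = (\<Sum>j\<in>S. y i * \<Sigma> i j * y j)" for i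
      by (rule sum.mono_neutral_right) (use S1 in \<open>auto simp: y_def\<close>)
    have "(\<Sum>i\<in>{1..p}. \<Sum>j\<in>{1..p}. y i * \<Sigma> i j * y j) = (\<Sum>i\<in>{1..p}. \<Sum>j\<in>S. y i * \<Sigma> i j * y j)"
      by (rule sum.cong[OF refl inner])
    also have "\<dots> = (\<Sum>i\<in>S. \<Sum>j\<in>S. y i * \<Sigma> i j * y j)"
      by (rule sum.mono_neutral_right) (use S1 in \<open>auto simp: y_def\<close>)
    also have "\<dots> = (\<Sum>i\<in>S. \<Sum>j\<in>S. x i * \<Sigma> i j * x j)"
      by (intro sum.cong) (auto simp: y_def)
    finally show "(\<Sum>i\<in>S. \<Sum>j\<in>S. x i * \<Sigma> i j * x j) > 0" using pos by simp
  qed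
  note BL = inv_on_props(3)[OF finS pd, folded B_def]
  have Mzero: "M i l = 0" if "l \<in> S" for i l
  proof -
    have "(\<Sum>k\<in>S. \<Sum>m\<in>S. \<Sigma> i k * B k m * \<Sigma> m l) = (\<Sum>k\<in>S. \<Sigma> i k * (\<Sum>m\<in>S. B k m * \<Sigma> m l))"
      by (simp add: sum_distrib_left mult.assoc)
    also have "\<dots> = (\<Sum>k\<in>S. \<Sigma> i k * (if k = l then 1 else 0))"
      using BL that by (intro sum.cong) auto
    also have "\<dots> = \<Sigma> i l" using that finS by (simp add: if_distrib[of "\<lambda>c. _ * c"] sum.delta' cong: if_cong)
    finally show ?thesis by (simp add: M_def B_def)
  qed
  have vform: "v i = (\<Sum>l\<in>R. M i l * \<gamma>0 l)" for i
  proof -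
    have g0: "(\<Sum>k\<in>T. \<Sigma> i k * \<gamma>S k) = (\<Sum>k\<in>S. \<Sigma> i k * \<gamma>S k)"
      by (rule sum.mono_neutral_right) (use ST finT in \<open>auto simp: \<gamma>S_def\<close>)
    also have "\<dots> = (\<Sum>k\<in>S. \<Sigma> i k * (\<Sum>m\<in>S. B k m * (\<Sum>l\<in>T. \<Sigma> m l * \<gamma>0 l)))"
      by (intro sum.cong) (auto simp: \<gamma>S_def B_def T_def)
    also have "\<dots> = (\<Sum>k\<in>S. \<Sum>m\<in>S. \<Sum>l\<in>T. \<Sigma> i k * B k m * \<Sigma> m l * \<gamma>0 l)"
      by (simp add: sum_distrib_left mult.assoc)
    also have "\<dots> = (\<Sum>k\<in>S. \<Sum>l\<in>T. \<Sum>m\<in>S. \<Sigma> i k * B k m * \<Sigma> m l * \<gamma>0 l)"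
      by (rule sum.cong[OF refl], rule sum.swap)
    also have "\<dots> = (\<Sum>l\<in>T. \<Sum>k\<in>S. \<Sum>m\<in>S. \<Sigma> i k * B k m * \<Sigma> m l * \<gamma>0 l)"
      by (rule sum.swap)
    also have "\<dots> = (\<Sum>l\<in>T. (\<Sum>k\<in>S. \<Sum>m\<in>S. \<Sigma> i k * B k m * \<Sigma> m l) * \<gamma>0 l)"
      by (simp add: sum_distrib_right)
    finally have e2: "(\<Sum>k\<in>T. \<Sigma> i k * \<gamma>S k) = (\<Sum>l\<in>T. (\<Sum>k\<in>S. \<Sum>m\<in>S. \<Sigma> i k * B k m * \<Sigma> m l) * \<gamma>0 l)" .
    have "v i = (\<Sum>k\<in>T. \<Sigma> i k * \<gamma>0 k) - (\<Sum>k\<in>T. \<Sigma> i k * \<gamma>S k)"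
      by (simp add: v_def T_def algebra_simps sum_subtractf)
    also have "\<dots> = (\<Sum>l\<in>T. M i l * \<gamma>0 l)"
      unfolding e2 by (simp add: M_def B_def algebra_simps sum_subtractf)
    also have "\<dots> = (\<Sum>l\<in>R. M i l * \<gamma>0 l)"
      by (rule sum.mono_neutral_right) (use finT Mzero in \<open>auto simp: R_def\<close>)
    finally show ?thesis .
  qed
  define sn where "sn = sup_norm_on R \<gamma>0"
  define mn where "mn = mat_norm1_on R M"
  have sn0: "0 \<le> sn" unfolding sn_def sup_norm_on_def using finR by (intro Max_ge) auto
  have snge: "\<bar>\<gamma>0 l\<bar> \<le> sn" if "l \<in> R" for l
    unfolding sn_def sup_norm_on_def using finR that by (intro Max_ge) auto
  have mn0: "0 \<le> mn" unfolding mn_def mat_norm1_on_def using finR by (intro Max_ge) auto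
  have mnge: "(\<Sum>l\<in>R. \<bar>M i l\<bar>) \<le> mn" if "i \<in> R" for i
    unfolding mn_def mat_norm1_on_def using finR that by (intro Max_ge) auto
  have bound: "\<bar>v i\<bar> \<le> mn * sn" if "i \<in> R" for i
  proof -
    have "\<bar>v i\<bar> \<le> (\<Sum>l\<in>R. \<bar>M i l * \<gamma>0 l\<bar>)" unfolding vform by (rule sum_abs)
    also have "\<dots> \<le> (\<Sum>l\<in>R. \<bar>M i l\<bar> * sn)"
      by (intro sum_mono) (simp add: abs_mult mult_left_mono snge)
    also have "\<dots> = (\<Sum>l\<in>R. \<bar>M i l\<bar>) * sn" by (simp add: sum_distrib_right)
    also have "\<dots> \<le> mn * sn" using mnge[OF that] sn0 by (rule mult_right_mono)
    finally show ?thesis .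
  qed
  have "sup_norm_on R v \<le> mn * sn"
    unfolding sup_norm_on_def using finR bound mn0 sn0 by (auto intro: Max.boundedI)
  then show ?thesis by (simp add: R_def T_def mn_def sn_def M_def)
qed

end
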